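(* Let $v_0\in\mathbb{R}^n$ be a unit vector, $\tau>0$, $\epsilon\ge 0$, and let $\mathbf{A}(x)$ be a homogeneous cubic polynomial such that $|\tilde{\mathbb{E}}\,\mathbf{A}(x)|\le \epsilon\tau(\tilde{\mathbb{E}}\|x\|^4)^{3/4}$ for every degree-$4$ pseudo-expectation $\tilde{\mathbb{E}}$. Let $\mathbf{T}(x)=\tau\langle v_0,x\rangle^3+\mathbf{A}(x)$, and let $\tilde{\mathbb{E}}$ be any degree-$4$ pseudo-expectation satisfying $\{\|x\|^2=1\}$ that maximizes $\tilde{\mathbb{E}}\,\mathbf{T}(x)$ among all degree-$4$ pseudo-expectations satisfying $\{\|x\|^2=1\}$. Then $v:=\tilde{\mathbb{E}}x/\|\tilde{\mathbb{E}}x\|$ (where $\tilde{\mathbb{E}}x\in\mathbb{R}^n$ has coordinates $\tilde{\mathbb{E}}x_i$) satisfies $\langle v,v_0\rangle\ge 1-O(\epsilon)$.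
   Context: A degree-$d$ pseudo-expectation ($d$ even) is a linear functional $\tilde{\mathbb{E}}:\mathbb{R}[x]_{\le d}\to\mathbb{R}$ with $\tilde{\mathbb{E}}\,1=1$ and $\tilde{\mathbb{E}}\,p(x)^2\ge 0$ for every polynomial $p$ of degree at most $d/2$. It satisfies $\{p(x)=0\}$ if $\tilde{\mathbb{E}}\,p(x)q(x)=0$ for all $q$ with $\deg(pq)\le d$. *)

theory Defs
  imports Complex_Main "HOL-Library.Multiset"
begin

text \<open>Polynomials in the variables x_0, ..., x_(n-1) with real coefficients are represented
  by their coefficient functions: a polynomial p is a function from monomials
  (multisets of variable indices; the multiset alpha stands for the monomial
  prod_(i in# alpha) x_i) to reals.\<close>

definition monoms :: "nat \<Rightarrow> nat \<Rightarrow> nat multiset set" where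
  "monoms n d = {\<alpha>. set_mset \<alpha> \<subseteq> {..<n} \<and> size \<alpha> \<le> d}"

definition poly_in :: "nat \<Rightarrow> nat \<Rightarrow> (nat multiset \<Rightarrow> real) \<Rightarrow> bool" where
  "poly_in n d p \<longleftrightarrow> (\<forall>\<alpha>. p \<alpha> \<noteq> 0 \<longrightarrow> \<alpha> \<in> monoms n d)"

definition pmul :: "(nat multiset \<Rightarrow> real) \<Rightarrow> (nat multiset \<Rightarrow> real) \<Rightarrow> nat multiset \<Rightarrow> real" where
  "pmul p q \<gamma> = (\<Sum>\<alpha>\<in>{\<alpha>. \<alpha> \<subseteq># \<gamma>}. p \<alpha> * q (\<gamma> - \<alpha>))"

definition pone :: "nat multiset \<Rightarrow> real" where
  "pone \<alpha> = (if \<alpha> = {#} then 1 else 0)"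

definition sqnorm :: "nat \<Rightarrow> nat multiset \<Rightarrow> real" where
  "sqnorm n \<alpha> = (if \<exists>i<n. \<alpha> = {#i, i#} then 1 else 0)"

definition linform :: "nat \<Rightarrow> (nat \<Rightarrow> real) \<Rightarrow> nat multiset \<Rightarrow> real" where
  "linform n v \<alpha> = (if \<exists>i<n. \<alpha> = {#i#} then (\<Sum>i\<in>#\<alpha>. v i) else 0)"

text \<open>A linear functional on polynomials of degree at most d in n variables is determined by
  its values L alpha on the monomials alpha in monoms n d; its value on p is pE n d L p.\<close>
definition pE :: "nat \<Rightarrow> nat \<Rightarrow> (nat multiset \<Rightarrow> real) \<Rightarrow> (nat multiset \<Rightarrow> real) \<Rightarrow> real" where
  "pE n d L p = (\<Sum>\<alpha>\<in>monoms n d. p \<alpha> * L \<alpha>)"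

definition pseudo_exp :: "nat \<Rightarrow> nat \<Rightarrow> (nat multiset \<Rightarrow> real) \<Rightarrow> bool" where
  "pseudo_exp n d L \<longleftrightarrow> pE n d L pone = 1 \<and>
     (\<forall>q. poly_in n (d div 2) q \<longrightarrow> pE n d L (pmul q q) \<ge> 0)"

text \<open>The pseudo-expectation satisfies {p = 0} (p of degree k): E p q = 0 whenever deg(pq) <= d,
  i.e. for all q of degree at most d - k.\<close>
definition satisfies :: "nat \<Rightarrow> nat \<Rightarrow> (nat multiset \<Rightarrow> real) \<Rightarrow> nat \<Rightarrow> (nat multiset \<Rightarrow> real) \<Rightarrow> bool" where
  "satisfies n d L k p \<longleftrightarrow> (\<forall>q. poly_in n (d - k) q \<longrightarrow> pE n d L (pmul p q) = 0)"

definition sphere_poly :: "nat \<Rightarrow> nat multiset \<Rightarrow> real" where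
  "sphere_poly n \<alpha> = sqnorm n \<alpha> - pone \<alpha>"

definition homogeneous_cubic :: "nat \<Rightarrow> (nat multiset \<Rightarrow> real) \<Rightarrow> bool" where
  "homogeneous_cubic n A \<longleftrightarrow> (\<forall>\<alpha>. A \<alpha> \<noteq> 0 \<longrightarrow> set_mset \<alpha> \<subseteq> {..<n} \<and> size \<alpha> = 3)"

end

theory Submission imports Defs "HOL-Library.Poly_Mapping" begin

type_synonym mp = "nat multiset \<Rightarrow>\<^sub>0 real"
abbreviation lk :: "('a \<Rightarrow>\<^sub>0 'b::zero) \<Rightarrow> 'a \<Rightarrow> 'b" where "lk \<equiv> poly_mapping.lookup"

lemma finite_msets_bounded:
  assumes "finite A" shows "finite {M. set_mset M \<subseteq> A \<and> size M \<le> d}"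
proof -
  have "{M. set_mset M \<subseteq> A \<and> size M \<le> d} = (\<Union>k\<in>{..d}. multisets_of_size A k)"
    by (auto simp: multisets_of_size_def)
  thus ?thesis using assms by auto
qed

lemma finite_monoms: "finite (monoms n d)"
  unfolding monoms_def by (rule finite_msets_bounded) simp

lemma finite_submsets: "finite {a. a \<subseteq># (g::'a multiset)}"
proof -
  have "{a. a \<subseteq># g} \<subseteq> {M. set_mset M \<subseteq> set_mset g \<and> size M \<le> size g}"
    by (auto simp: size_mset_mono dest: set_mset_mono)
  thus ?thesis using finite_msets_bounded[of "set_mset g" "size g"] finite_subset by blast
qed

lemma inner_sum:
  "(\<Sum>q. (f q::real) when k = l + q) = (if l \<subseteq># k then f (k - l) else 0)"
proof (cases "l \<subseteq># k")
  case True
  have "(\<Sum>q. f q when k = l + q) = (\<Sum>q. f q when q = k - l)"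
    using True by (intro Sum_any.cong) (auto simp: when_def subset_mset.add_diff_inverse)
  then show ?thesis using True by simp
next
  case False
  have "\<And>q. (f q when k = l + q) = 0"
    using False by (auto simp: when_def)
  then show ?thesis using False by simp
qed

lemma pmul_lk: "pmul (lk P) (lk Q) = lk (P * Q)"
proof
  fix k
  have "lk (P*Q) k = Sum_any (\<lambda>l. lk P l * Sum_any (\<lambda>q. lk Q q when k = l + q))" by (rule lookup_mult)
  also have "\<dots> = Sum_any (\<lambda>l. lk P l * (if l \<subseteq># k then lk Q (k - l) else 0))"
    by (simp add: inner_sum)
  also have "\<dots> = (\<Sum>l\<in>{a. a \<subseteq># k}. lk P l * (if l \<subseteq># k then lk Q (k - l) else 0))"
    by (rule Sum_any.expand_superset) (auto simp: finite_submsets)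
  also have "\<dots> = pmul (lk P) (lk Q) k"
    by (simp add: pmul_def)
  finally show "pmul (lk P) (lk Q) k = lk (P * Q) k" by simp
qed

definition Cst :: "real \<Rightarrow> mp" where "Cst c = Poly_Mapping.single {#} c"
definition X :: "nat \<Rightarrow> mp" where "X i = Poly_Mapping.single {#i#} 1"

lemma lk_Cst_mult: "lk (Cst c * P) k = c * lk P k"
  unfolding Cst_def
  by (simp add: mult_map_scale_conv_mult[symmetric, simplified] Poly_Mapping.map.rep_eq when_def)

lemma Cst_mult: "Cst (a * b) = Cst a * Cst b" by (simp add: Cst_def mult_single)
lemma Cst_add: "Cst (a + b) = Cst a + Cst b" by (simp add: Cst_def single_add)
lemma Cst_diff: "Cst (a - b) = Cst a - Cst b" by (simp add: Cst_def single_diff)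
lemma Cst_one: "Cst 1 = 1" by (simp add: Cst_def)
lemma Cst_zero: "Cst 0 = 0" by (simp add: Cst_def)
lemma Cst_sum: "Cst (sum f A) = (\<Sum>i\<in>A. Cst (f i))"
  by (induction A rule: infinite_finite_induct) (auto simp: Cst_add Cst_zero)
lemma Cst_power: "Cst (a ^ k) = Cst a ^ k"
  by (induction k) (auto simp: Cst_mult Cst_one)


lemma lk_X_mult: "lk (X i * P) = lk (Poly_Mapping.single {#i#} 1 * P)" by (simp add: X_def)

definition dg :: "nat \<Rightarrow> nat \<Rightarrow> mp \<Rightarrow> bool" where "dg n d P \<longleftrightarrow> Poly_Mapping.keys P \<subseteq> monoms n d"

lemma dg_poly_in: "dg n d P \<longleftrightarrow> poly_in n d (lk P)"
  by (auto simp: dg_def poly_in_def in_keys_iff)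

lemma monoms_mono: "a \<le> b \<Longrightarrow> monoms n a \<subseteq> monoms n b"
  by (auto simp: monoms_def)

lemma dg_mono: "dg n a P \<Longrightarrow> a \<le> b \<Longrightarrow> dg n b P"
  unfolding dg_def by (metis monoms_mono order_trans)

lemma dg_add: "dg n d P \<Longrightarrow> dg n d Q \<Longrightarrow> dg n d (P + Q)"
  unfolding dg_def using keys_add[of P Q] by blast

lemma dg_diff: "dg n d P \<Longrightarrow> dg n d Q \<Longrightarrow> dg n d (P - Q)"
  unfolding dg_def by (auto simp: in_keys_iff lookup_minus) (metis in_keys_iff subsetD)

lemma dg_zero: "dg n d 0" by (simp add: dg_def)

lemma dg_sum: "(\<And>i. i \<in> I \<Longrightarrow> dg n d (f i)) \<Longrightarrow> dg n d (sum f I)"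
  by (induction I rule: infinite_finite_induct) (auto simp: dg_zero dg_add)

lemma dg_mult: "dg n a P \<Longrightarrow> dg n b Q \<Longrightarrow> dg n (a + b) (P * Q)"
  unfolding dg_def using keys_mult[of P Q]
  by (fastforce simp: monoms_def)

lemma dg_Cst: "dg n 0 (Cst c)" by (simp add: dg_def Cst_def monoms_def)
lemma dg_one: "dg n 0 1" using dg_Cst[of n 1] by (simp add: Cst_one)
lemma dg_X: "i < n \<Longrightarrow> dg n 1 (X i)" by (simp add: dg_def X_def monoms_def)

lemma dg_Cst_mult: "dg n d P \<Longrightarrow> dg n d (Cst c * P)"
  using dg_mult[OF dg_Cst, of n d P c] by simp

lemma dg_power: "dg n d P \<Longrightarrow> dg n (k * d) (P ^ k)"
  by (induction k) (auto simp: dg_one intro: dg_mult)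

definition ev :: "nat \<Rightarrow> (nat multiset \<Rightarrow> real) \<Rightarrow> mp \<Rightarrow> real" where
  "ev n L P = pE n 4 L (lk P)"

lemma ev_add: "ev n L (P + Q) = ev n L P + ev n L Q"
  by (simp add: ev_def pE_def lookup_add algebra_simps sum.distrib)
lemma ev_diff: "ev n L (P - Q) = ev n L P - ev n L Q"
  by (simp add: ev_def pE_def lookup_minus algebra_simps sum_subtractf)
lemma ev_zero: "ev n L 0 = 0"
  by (simp add: ev_def pE_def)
lemma ev_sum: "ev n L (sum f I) = (\<Sum>i\<in>I. ev n L (f i))"
  by (induction I rule: infinite_finite_induct) (auto simp: ev_zero ev_add)
lemma ev_Cst_mult: "ev n L (Cst c * P) = c * ev n L P"
  by (simp add: ev_def pE_def lk_Cst_mult sum_distrib_left mult.assoc)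
lemma ev_single: "ev n L (Poly_Mapping.single a c) = (if a \<in> monoms n 4 then c * L a else 0)"
proof -
  have "\<And>x. lk (Poly_Mapping.single a c) x * L x = (if x = a then c * L a else 0)"
    by (auto simp: lookup_single when_def)
  then have "ev n L (Poly_Mapping.single a c) = (\<Sum>x\<in>monoms n 4. if x = a then c * L a else 0)"
    unfolding ev_def pE_def by (intro sum.cong) auto
  then show ?thesis by (simp add: sum.delta finite_monoms)
qed

lemma dg_expand: "dg n d P \<Longrightarrow> P = (\<Sum>a\<in>monoms n d. Poly_Mapping.single a (lk P a))"
  by (rule poly_mapping_eqI)
     (auto simp: lookup_sum lookup_single when_def finite_monoms dg_def in_keys_iff)

lemma ev_dg: "dg n d P \<Longrightarrow> d \<le> 4 \<Longrightarrow> ev n L P = (\<Sum>a\<in>monoms n d. lk P a * L a)"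
proof -
  assume a: "dg n d P" "d \<le> 4"
  have "ev n L P = (\<Sum>a\<in>monoms n d. ev n L (Poly_Mapping.single a (lk P a)))"
    by (subst dg_expand[OF a(1)]) (simp add: ev_sum)
  also have "\<dots> = (\<Sum>a\<in>monoms n d. lk P a * L a)"
    using monoms_mono[OF a(2)] by (intro sum.cong) (auto simp: ev_single)
  finally show ?thesis .
qed

lemma ev_mult: "dg n a P \<Longrightarrow> dg n b Q \<Longrightarrow> a + b \<le> 4 \<Longrightarrow>
  ev n L (P * Q) = (\<Sum>x\<in>monoms n a. \<Sum>y\<in>monoms n b. lk P x * lk Q y * L (x + y))"
proof -
  assume a: "dg n a P" "dg n b Q" "a + b \<le> 4"
  have "P * Q = (\<Sum>x\<in>monoms n a. Poly_Mapping.single x (lk P x)) * (\<Sum>y\<in>monoms n b. Poly_Mapping.single y (lk Q y))"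
    using dg_expand[OF a(1)] dg_expand[OF a(2)] by simp
  also have "\<dots> = (\<Sum>x\<in>monoms n a. \<Sum>y\<in>monoms n b. Poly_Mapping.single (x + y) (lk P x * lk Q y))"
    by (subst sum_product) (simp add: mult_single)
  finally have "ev n L (P * Q) = (\<Sum>x\<in>monoms n a. \<Sum>y\<in>monoms n b. ev n L (Poly_Mapping.single (x + y) (lk P x * lk Q y)))"
    by (simp add: ev_sum)
  also have "\<dots> = (\<Sum>x\<in>monoms n a. \<Sum>y\<in>monoms n b. lk P x * lk Q y * L (x + y))"
  proof (intro sum.cong refl)
    fix x y assume "x \<in> monoms n a" "y \<in> monoms n b"
    then have "x + y \<in> monoms n 4" using a(3) by (auto simp: monoms_def)
    then show "ev n L (Poly_Mapping.single (x + y) (lk P x * lk Q y)) = lk P x * lk Q y * L (x + y)"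
      by (simp add: ev_single)
  qed
  finally show ?thesis .
qed

definition L0 :: "(nat \<Rightarrow> real) \<Rightarrow> nat multiset \<Rightarrow> real" where
  "L0 v a = prod_mset (image_mset v a)"

lemma ev0_mult: "dg n a P \<Longrightarrow> dg n b Q \<Longrightarrow> a + b \<le> 4 \<Longrightarrow>
  ev n (L0 v) (P * Q) = ev n (L0 v) P * ev n (L0 v) Q"
proof -
  assume a: "dg n a P" "dg n b Q" "a + b \<le> 4"
  have "ev n (L0 v) (P * Q) = (\<Sum>x\<in>monoms n a. \<Sum>y\<in>monoms n b. (lk P x * L0 v x) * (lk Q y * L0 v y))"
    by (simp add: ev_mult[OF a] L0_def mult_ac)
  also have "\<dots> = ev n (L0 v) P * ev n (L0 v) Q"
    using a by (simp add: ev_dg sum_product)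
  finally show ?thesis .
qed


definition sq :: "nat \<Rightarrow> mp" where "sq n = (\<Sum>i<n. X i * X i)"
definition lin :: "nat \<Rightarrow> (nat \<Rightarrow> real) \<Rightarrow> mp" where "lin n w = (\<Sum>i<n. Cst (w i) * X i)"

lemma dbl_inj: "({#j, j#} = {#i, i#}) \<longleftrightarrow> j = i"
  by (auto dest: arg_cong[of _ _ set_mset])

lemma Cst_numeral: "Cst (numeral k) = numeral k" by (simp add: Cst_def)

lemma XX: "X i * X i = Poly_Mapping.single {#i, i#} 1"
  by (simp add: X_def mult_single)

lemma sqnorm_lk: "sqnorm n = lk (sq n)"
proof
  fix a
  have "lk (sq n) a = (\<Sum>i<n. if i \<in> {j. {#j, j#} = a} then 1 else 0)"
    by (simp add: sq_def XX lookup_sum lookup_single when_def)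
  also have "\<dots> = real (card ({..<n} \<inter> {j. {#j, j#} = a}))"
    by (simp add: sum.If_cases)
  also have "\<dots> = sqnorm n a"
  proof (cases "\<exists>i<n. a = {#i, i#}")
    case True
    then obtain i where i: "i < n" "a = {#i, i#}" by blast
    then have "{..<n} \<inter> {j. {#j, j#} = a} = {i}"
      by (auto simp: dbl_inj)
    then show ?thesis using True by (simp add: sqnorm_def)
  next
    case False
    then have "{..<n} \<inter> {j. {#j, j#} = a} = {}" by auto
    then show ?thesis using False by (simp add: sqnorm_def)
  qed
  finally show "sqnorm n a = lk (sq n) a" by simp
qed

lemma linform_lk: "linform n w = lk (lin n w)"
proof
  fix a
  have "lk (lin n w) a = (\<Sum>i<n. if i \<in> {j. {#j#} = a} then w i else 0)"
    by (simp add: lin_def X_def lookup_sum lk_Cst_mult lookup_single when_def if_distrib cong: if_cong)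
  also have "\<dots> = (\<Sum>i\<in>{..<n} \<inter> {j. {#j#} = a}. w i)"
    by (simp add: sum.If_cases)
  also have "\<dots> = linform n w a"
  proof (cases "\<exists>i<n. a = {#i#}")
    case True
    then obtain i where i: "i < n" "a = {#i#}" by blast
    then have "{..<n} \<inter> {j. {#j#} = a} = {i}" by auto
    then show ?thesis using True i by (simp add: linform_def)
  next
    case False
    then have "{..<n} \<inter> {j. {#j#} = a} = {}" by auto
    then show ?thesis using False by (auto simp: linform_def)
  qed
  finally show "linform n w a = lk (lin n w) a" by simp
qed

lemma pone_lk: "pone = lk 1"
  by (auto simp: pone_def lookup_one when_def)

lemma sphere_lk: "sphere_poly n = lk (sq n - 1)"
  by (auto simp: sphere_poly_def sqnorm_lk pone_lk lookup_minus)

lemma dg_sq: "dg n 2 (sq n)"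
  unfolding sq_def by (rule dg_sum) (metis dg_X dg_mult lessThan_iff one_add_one)

lemma dg_lin: "dg n 1 (lin n w)"
  unfolding lin_def by (rule dg_sum) (metis dg_Cst_mult dg_X lessThan_iff)

lemma ev_X: "i < n \<Longrightarrow> ev n L (X i) = L {#i#}"
  by (simp add: X_def ev_single monoms_def)
lemma ev_one: "ev n L 1 = L {#}"
  using ev_single[of n L "{#}" 1] by (simp add: monoms_def)

lemma ev_lin: "ev n L (lin n w) = (\<Sum>i<n. w i * L {#i#})"
  by (simp add: lin_def ev_sum ev_Cst_mult ev_X)

lemma identity:
  fixes w :: "nat \<Rightarrow> real" and n :: nat
  defines "W \<equiv> (\<Sum>i<n. (w i)\<^sup>2)"
  shows "(\<Sum>i<n. (Cst W * X i - Cst (w i) * lin n w)\<^sup>2) = Cst (W\<^sup>2) * sq n - Cst W * (lin n w)\<^sup>2"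
proof -
  let ?P = "lin n w"
  have "(\<Sum>i<n. (Cst W * X i - Cst (w i) * ?P)\<^sup>2) =
     (\<Sum>i<n. Cst (W\<^sup>2) * (X i * X i) - Cst 2 * Cst W * ?P * (Cst (w i) * X i) + Cst ((w i)\<^sup>2) * ?P\<^sup>2)"
    by (intro sum.cong refl) (simp add: power2_eq_square Cst_mult algebra_simps Cst_numeral)
  also have "\<dots> = Cst (W\<^sup>2) * sq n - Cst 2 * Cst W * ?P * ?P + Cst W * ?P\<^sup>2"
    by (simp add: sum.distrib sum_subtractf sum_distrib_left sum_distrib_right sq_def lin_def W_def Cst_sum)
  also have "\<dots> = Cst (W\<^sup>2) * sq n - Cst W * ?P\<^sup>2"
    by (simp add: power2_eq_square algebra_simps Cst_numeral)
  finally show ?thesis .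
qed


lemma ev_Cst: "ev n L (Cst c) = c * L {#}"
  using ev_Cst_mult[of n L c 1] by (simp add: ev_one)

context
  fixes n :: nat and L :: "nat multiset \<Rightarrow> real"
  assumes PE: "pseudo_exp n 4 L" and SA: "satisfies n 4 L 2 (sphere_poly n)"
begin

lemma psd: "dg n 2 Q \<Longrightarrow> 0 \<le> ev n L (Q\<^sup>2)"
  using PE unfolding pseudo_exp_def
  by (auto simp: dg_poly_in pmul_lk ev_def power2_eq_square)

lemma sph: "dg n 2 Q \<Longrightarrow> ev n L ((sq n - 1) * Q) = 0"
  using SA unfolding satisfies_def
  by (auto simp: dg_poly_in pmul_lk ev_def sphere_lk)

lemma ev1: "ev n L 1 = 1"
  using PE by (simp add: pseudo_exp_def pone_lk ev_def)

lemma L_empty: "L {#} = 1" using ev1 by (simp add: ev_one)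

lemma ev_shift: "dg n 2 Q \<Longrightarrow> ev n L (sq n * Q) = ev n L Q"
  using sph[of Q] by (simp add: algebra_simps ev_diff)

lemma ev_sq: "ev n L (sq n) = 1"
proof -
  have "dg n 2 1" by (rule dg_mono[OF dg_one]) simp
  then show ?thesis using ev_shift[of 1] by (simp add: ev1)
qed

lemma ev_sqsq: "ev n L (sq n * sq n) = 1"
  using ev_shift[OF dg_sq] ev_sq by simp

lemma sos_terms_dg: "i < n \<Longrightarrow> dg n 1 (Cst a * X i - Cst b * lin n w)"
  by (intro dg_diff dg_Cst_mult dg_X dg_lin)

lemma sos_bound:
  "0 \<le> (\<Sum>i<n. (w i)\<^sup>2)\<^sup>2 - (\<Sum>i<n. (w i)\<^sup>2) * ev n L ((lin n w)\<^sup>2)"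
proof -
  let ?W = "\<Sum>i<n. (w i)\<^sup>2"
  have "0 \<le> (\<Sum>i<n. ev n L ((Cst ?W * X i - Cst (w i) * lin n w)\<^sup>2))"
    by (intro sum_nonneg psd dg_mono[OF sos_terms_dg]) auto
  also have "\<dots> = ev n L (\<Sum>i<n. (Cst ?W * X i - Cst (w i) * lin n w)\<^sup>2)"
    by (simp add: ev_sum)
  also have "\<dots> = ?W\<^sup>2 - ?W * ev n L ((lin n w)\<^sup>2)"
    by (simp add: identity ev_diff ev_Cst_mult ev_sq)
  finally show ?thesis .
qed

lemma sos_bound2:
  assumes v: "(\<Sum>i<n. (v i)\<^sup>2) = 1"
  shows "0 \<le> 1 + 2 * ev n L (lin n v) - 2 * ev n L ((lin n v)^3) - ev n L ((lin n v)^4)"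
proof -
  let ?t = "lin n v" let ?R = "1 + ?t"
  have dR: "dg n 1 ?R" by (intro dg_add dg_lin dg_mono[OF dg_one]) auto
  have dR2: "dg n 2 (?R\<^sup>2)" using dg_power[OF dR, of 2] by simp
  have "0 \<le> (\<Sum>i<n. ev n L ((?R * (Cst 1 * X i - Cst (v i) * ?t))\<^sup>2))"
    by (intro sum_nonneg psd) (metis dR sos_terms_dg dg_mult lessThan_iff one_add_one)
  also have "\<dots> = ev n L (?R\<^sup>2 * (\<Sum>i<n. (Cst 1 * X i - Cst (v i) * ?t)\<^sup>2))"
    by (simp add: ev_sum sum_distrib_left power_mult_distrib)
  also have "\<dots> = ev n L (?R\<^sup>2 * (sq n - ?t\<^sup>2))"
    using identity[of v n] v by (simp add: Cst_one)
  also have "\<dots> = ev n L (sq n * ?R\<^sup>2) - ev n L (?R\<^sup>2 * ?t\<^sup>2)"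
    by (simp add: algebra_simps ev_diff)
  also have "\<dots> = ev n L (?R\<^sup>2 - ?R\<^sup>2 * ?t\<^sup>2)"
    by (simp add: ev_shift[OF dR2] ev_diff)
  also have "?R\<^sup>2 - ?R\<^sup>2 * ?t\<^sup>2 = 1 + Cst 2 * ?t - Cst 2 * ?t^3 - ?t^4"
    by (simp add: Cst_numeral power2_eq_square power3_eq_cube power4_eq_xxxx algebra_simps)
  finally show ?thesis by (simp add: ev_add ev_diff ev_Cst_mult ev1)
qed

lemma sos_bound3: "0 \<le> ev n L ((lin n v)^4) - 2 * ev n L ((lin n v)^3) + ev n L ((lin n v)^2)"
proof -
  let ?t = "lin n v"
  have d: "dg n 2 (?t\<^sup>2 - ?t)" by (intro dg_diff dg_mono[OF dg_lin] dg_mono[OF dg_power[OF dg_lin]]) auto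
  have "0 \<le> ev n L ((?t\<^sup>2 - ?t)\<^sup>2)" by (rule psd[OF d])
  also have "(?t\<^sup>2 - ?t)\<^sup>2 = ?t^4 - Cst 2 * ?t^3 + ?t^2"
    by (simp add: Cst_numeral power2_eq_square power3_eq_cube power4_eq_xxxx algebra_simps)
  finally show ?thesis by (simp add: ev_add ev_diff ev_Cst_mult)
qed

lemma W_le_1:
  assumes "0 < (\<Sum>i<n. (L {#i#})\<^sup>2)"
  shows "(\<Sum>i<n. (L {#i#})\<^sup>2) \<le> 1"
proof -
  let ?u = "\<lambda>i. L {#i#}" let ?W = "\<Sum>i<n. (?u i)\<^sup>2" let ?P = "lin n ?u"
  have eP: "ev n L ?P = ?W" by (simp add: ev_lin power2_eq_square)
  have d: "dg n 2 (?P - Cst ?W)" by (intro dg_diff dg_mono[OF dg_lin] dg_mono[OF dg_Cst]) auto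
  have "0 \<le> ev n L ((?P - Cst ?W)\<^sup>2)" by (rule psd[OF d])
  also have "(?P - Cst ?W)\<^sup>2 = ?P\<^sup>2 - Cst 2 * (Cst ?W * ?P) + Cst (?W\<^sup>2)"
    by (simp add: Cst_numeral power2_eq_square Cst_mult algebra_simps)
  finally have "0 \<le> ev n L (?P\<^sup>2) - 2 * (?W * ?W) + ?W\<^sup>2"
    by (simp add: ev_add ev_diff ev_Cst_mult ev_Cst L_empty eP)
  then have a: "?W\<^sup>2 \<le> ev n L (?P\<^sup>2)" by (simp add: power2_eq_square)
  have b: "?W * ev n L (?P\<^sup>2) \<le> ?W\<^sup>2" using sos_bound[of ?u] by simp
  have "?W * ?W\<^sup>2 \<le> ?W\<^sup>2" using mult_left_mono[OF a, of ?W] assms b by linarith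
  then show ?thesis using assms by (simp add: power2_eq_square)
qed

end


context
  fixes n :: nat and v :: "nat \<Rightarrow> real"
  assumes V: "(\<Sum>i<n. (v i)\<^sup>2) = 1"
begin

lemma ev0_X: "i < n \<Longrightarrow> ev n (L0 v) (X i) = v i"
  by (simp add: ev_X L0_def)

lemma ev0_one: "ev n (L0 v) 1 = 1"
  by (simp add: ev_one L0_def)

lemma ev0_sq: "ev n (L0 v) (sq n) = 1"
proof -
  have "ev n (L0 v) (sq n) = (\<Sum>i<n. ev n (L0 v) (X i * X i))" by (simp add: sq_def ev_sum)
  also have "\<dots> = (\<Sum>i<n. (v i)\<^sup>2)"
    by (intro sum.cong refl) (simp add: ev0_mult[OF dg_X dg_X] ev0_X power2_eq_square)
  finally show ?thesis using V by simp
qed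

lemma ev0_lin: "ev n (L0 v) (lin n v) = 1"
  using V by (simp add: ev_lin L0_def power2_eq_square)

lemma ev0_sqsq: "ev n (L0 v) (sq n * sq n) = 1"
  by (simp add: ev0_mult[OF dg_sq dg_sq] ev0_sq)

lemma ev0_cube: "ev n (L0 v) (lin n v * lin n v * lin n v) = 1"
proof -
  have d2: "dg n 2 (lin n v * lin n v)" using dg_mult[OF dg_lin dg_lin, of n v v] by (simp add: numeral_2_eq_2)
  show ?thesis by (simp add: ev0_mult[OF d2 dg_lin] ev0_mult[OF dg_lin dg_lin] ev0_lin)
qed

lemma poly_in_Abs: "poly_in n d q \<Longrightarrow> q = lk (Abs_poly_mapping q) \<and> dg n d (Abs_poly_mapping q)"
proof -
  assume a: "poly_in n d q"
  have "finite {x. q x \<noteq> 0}"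
    using a finite_monoms[of n d] unfolding poly_in_def by (auto intro: finite_subset)
  then have "lk (Abs_poly_mapping q) = q" by simp
  then show ?thesis using a by (simp add: dg_poly_in)
qed

lemma L0_pseudo: "pseudo_exp n 4 (L0 v)"
  unfolding pseudo_exp_def
proof (intro conjI allI impI)
  show "pE n 4 (L0 v) pone = 1" using ev0_one by (simp add: ev_def pone_lk)
  fix q assume "poly_in n (4 div 2) q"
  then obtain Q where Q: "q = lk Q" "dg n 2 Q" using poly_in_Abs by fastforce
  have "pE n 4 (L0 v) (pmul q q) = ev n (L0 v) (Q * Q)" by (simp add: Q pmul_lk ev_def)
  also have "\<dots> = (ev n (L0 v) Q)\<^sup>2" by (simp add: ev0_mult[OF Q(2) Q(2)] power2_eq_square)
  finally show "0 \<le> pE n 4 (L0 v) (pmul q q)" by simp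
qed

lemma L0_sat: "satisfies n 4 (L0 v) 2 (sphere_poly n)"
  unfolding satisfies_def
proof (intro allI impI)
  fix q assume "poly_in n (4 - 2) q"
  then obtain Q where Q: "q = lk Q" "dg n 2 Q" using poly_in_Abs by fastforce
  have ds: "dg n 2 (sq n - 1)" by (intro dg_diff dg_sq dg_mono[OF dg_one]) simp
  have "pE n 4 (L0 v) (pmul (sphere_poly n) q) = ev n (L0 v) ((sq n - 1) * Q)"
    by (simp add: Q pmul_lk ev_def sphere_lk)
  also have "\<dots> = 0" by (simp add: ev0_mult[OF ds Q(2)] ev_diff ev0_sq ev0_one)
  finally show "pE n 4 (L0 v) (pmul (sphere_poly n) q) = 0" .
qed

end

lemma pE_T: "pE n 4 L (\<lambda>a. c * pmul (pmul (linform n v) (linform n v)) (linform n v) a + A a)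
   = c * ev n L (lin n v * lin n v * lin n v) + pE n 4 L A"
  by (simp add: pE_def linform_lk pmul_lk ev_def algebra_simps sum.distrib sum_distrib_left)

lemma pE_sqsq: "pE n 4 L (pmul (sqnorm n) (sqnorm n)) = ev n L (sq n * sq n)"
  by (simp add: sqnorm_lk pmul_lk ev_def)


theorem mainTheorem3:
  "\<exists>C::real. \<forall>(n::nat) (v0::nat \<Rightarrow> real) (\<tau>::real) (\<epsilon>::real) A L.
     (\<Sum>i<n. (v0 i)\<^sup>2) = 1 \<longrightarrow> \<tau> > 0 \<longrightarrow> \<epsilon> \<ge> 0 \<longrightarrow>
     homogeneous_cubic n A \<longrightarrow>
     (\<forall>L'. pseudo_exp n 4 L' \<longrightarrow>
        \<bar>pE n 4 L' A\<bar> \<le> \<epsilon> * \<tau> * (pE n 4 L' (pmul (sqnorm n) (sqnorm n))) powr (3/4)) \<longrightarrow>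
     (let T = (\<lambda>\<alpha>. \<tau> * pmul (pmul (linform n v0) (linform n v0)) (linform n v0) \<alpha> + A \<alpha>)
      in pseudo_exp n 4 L \<and> satisfies n 4 L 2 (sphere_poly n) \<and>
         (\<forall>L'. pseudo_exp n 4 L' \<and> satisfies n 4 L' 2 (sphere_poly n) \<longrightarrow> pE n 4 L' T \<le> pE n 4 L T)
      \<longrightarrow> (let m = sqrt (\<Sum>i<n. (L {#i#})\<^sup>2)
          in (\<Sum>i<n. (L {#i#} / m) * v0 i) \<ge> 1 - C * \<epsilon>))"
proof (rule exI[of _ 8], unfold Let_def, intro allI impI, elim conjE)
  fix n v0 \<tau> \<epsilon> A L
  assume V: "(\<Sum>i<n. (v0 i)\<^sup>2) = 1" and tau: "\<tau> > 0" and eps: "\<epsilon> \<ge> 0"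
    and hc: "homogeneous_cubic n A" and hA: "\<forall>L'. pseudo_exp n 4 L' \<longrightarrow>
        \<bar>pE n 4 L' A\<bar> \<le> \<epsilon> * \<tau> * (pE n 4 L' (pmul (sqnorm n) (sqnorm n))) powr (3/4)"
    and PE: "pseudo_exp n 4 L" and SA: "satisfies n 4 L 2 (sphere_poly n)"
    and MAX: "\<forall>L'. pseudo_exp n 4 L' \<and> satisfies n 4 L' 2 (sphere_poly n) \<longrightarrow>
       pE n 4 L' (\<lambda>\<alpha>. \<tau> * pmul (pmul (linform n v0) (linform n v0)) (linform n v0) \<alpha> + A \<alpha>)
       \<le> pE n 4 L (\<lambda>\<alpha>. \<tau> * pmul (pmul (linform n v0) (linform n v0)) (linform n v0) \<alpha> + A \<alpha>)"
  let ?t = "lin n v0"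
  define e1 where "e1 = ev n L ?t"
  define e2 where "e2 = ev n L (?t^2)"
  define e3 where "e3 = ev n L (?t^3)"
  define e4 where "e4 = ev n L (?t^4)"
  have cube: "?t * ?t * ?t = ?t^3" by (simp add: power3_eq_cube)
  have aL: "pE n 4 L A \<le> \<epsilon> * \<tau>"
    using hA PE ev_sqsq[OF PE SA] by (auto simp: pE_sqsq)
  have a0: "pE n 4 (L0 v0) A \<ge> - (\<epsilon> * \<tau>)"
    using hA L0_pseudo[OF V] ev0_sqsq[OF V] by (force simp: pE_sqsq abs_le_iff)
  have "\<tau> * 1 + pE n 4 (L0 v0) A \<le> \<tau> * e3 + pE n 4 L A"
    using MAX L0_pseudo[OF V] L0_sat[OF V] ev0_cube[OF V]
    by (auto simp: pE_T e3_def cube)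
  then have "\<tau> * (1 - 2 * \<epsilon>) \<le> \<tau> * e3" using aL a0 by (simp add: algebra_simps)
  then have h3: "1 - 2 * \<epsilon> \<le> e3" using tau by simp
  have h2: "e2 \<le> 1" using sos_bound[OF PE SA, of v0] V by (simp add: e2_def)
  have h4: "0 \<le> e4 - 2 * e3 + e2" using sos_bound3[OF PE SA, of v0] by (simp add: e2_def e3_def e4_def)
  have h1: "0 \<le> 1 + 2 * e1 - 2 * e3 - e4" using sos_bound2[OF PE SA V] by (simp add: e1_def e3_def e4_def)
  have E1: "1 - 4 * \<epsilon> \<le> e1" using h1 h2 h3 h4 by linarith
  let ?u = "\<lambda>i. L {#i#}"
  define W where "W = (\<Sum>i<n. (?u i)\<^sup>2)"
  define m where "m = sqrt W"
  have e1s: "e1 = (\<Sum>i<n. v0 i * ?u i)" by (simp add: e1_def ev_lin)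
  have sumeq: "(\<Sum>i<n. (?u i / m) * v0 i) = e1 / m"
    by (simp add: e1s sum_divide_distrib mult_ac)
  have W0: "W \<ge> 0" by (simp add: W_def sum_nonneg)
  have CS: "- m \<le> e1" if "m > 0"
  proof -
    have "0 \<le> (\<Sum>i<n. (m * v0 i + ?u i)\<^sup>2)" by (simp add: sum_nonneg)
    also have "\<dots> = m\<^sup>2 * (\<Sum>i<n. (v0 i)\<^sup>2) + 2 * m * e1 + W"
      by (simp add: e1s W_def power2_sum sum.distrib sum_distrib_left power_mult_distrib algebra_simps)
    also have "\<dots> = 2 * m * m + 2 * m * e1"
      using V W0 by (simp add: m_def power2_eq_square)
    finally have "0 \<le> 2 * m * (m + e1)" by (simp add: algebra_simps)
    then show ?thesis using that by (simp add: zero_le_mult_iff)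
  qed
  show "1 - 8 * \<epsilon> \<le> (\<Sum>i<n. ?u i / m * v0 i)"
  proof (cases "\<epsilon> < 1/4")
    case True
    then have pos: "e1 > 0" using E1 by linarith
    have "W \<noteq> 0"
    proof
      assume "W = 0"
      then have "\<forall>i\<in>{..<n}. (?u i)\<^sup>2 = 0" unfolding W_def
        by (subst sum_nonneg_eq_0_iff[symmetric]) auto
      then have "e1 = 0" by (simp add: e1s)
      then show False using pos by simp
    qed
    then have Wp: "W > 0" using W0 by simp
    have W1: "W \<le> 1" using W_le_1[OF PE SA] Wp by (simp add: W_def)
    have mp: "0 < m" "m \<le> 1" using Wp W1 by (auto simp: m_def)
    have "e1 \<le> e1 / m" using pos mp by (simp add: le_divide_eq)
    then show ?thesis using sumeq E1 eps by simp
  next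
    case False
    have "-1 \<le> e1 / m"
    proof (cases "m > 0")
      case True then show ?thesis using CS[OF True] by (simp add: le_divide_eq)
    next
      case False then have "m = 0" using W0 by (simp add: m_def)
      then show ?thesis by simp
    qed
    then show ?thesis using sumeq False by simp
  qed
qed

end
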